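(* Let $p:\mathbb{R}^d\to\mathbb{R}^m$ be a cubic polynomial. Then there exists $w:\mathbb{Z}^d\to\mathbb{R}^m$ such that $\tilde w=p$ on $\mathbb{R}^d$.
   Context: Fix $d,m\in\mathbb{N}$. A function $\bar\zeta:\mathbb{R}^d\to\mathbb{R}$ is fixed satisfying: (Z1) $\bar\zeta\in W^{1,\infty}(\mathbb{R}^d)$; (Z2) the support of $\bar\zeta$ is compact; (Z3) $\sum_{\xi\in\mathbb{Z}^d}\bar\zeta(x-\xi)(a+b\cdot\xi)=a+b\cdot x$ for all $x\in\mathbb{R}^d$, $a\in\mathbb{R}$, $b\in\mathbb{R}^d$; (Z4) $\bar\zeta(0)=1$ and $\bar\zeta(\xi)=0$ for all $\xi\in\mathbb{Z}^d\setminus\{0\}$. For $w:\mathbb{Z}^d\to\mathbb{R}^m$, $\bar w(x):=\sum_{\xi\in\mathbb{Z}^d}w(\xi)\bar\zeta(x-\xi)$ and $\tilde w:=\bar\zeta\ast\bar w=\sum_\xi w(\xi)(\bar\zeta\ast\bar\zeta)(x-\xi)$. A cubic polynomial means each component is a polynomial of total degree at most $3$. *)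

theory Defs
  imports "HOL-Analysis.Analysis"
begin

definition lat :: "('d::finite \<Rightarrow> int) \<Rightarrow> real^'d" where
  "lat \<xi> = (\<chi> i. of_int (\<xi> i))"

text \<open>Standing assumptions (Z1)-(Z4) on the fixed function zeta. W^{1,inf}(R^d) is
  rendered as: bounded and Lipschitz (the continuous representative).\<close>
definition admissible_zeta :: "(real^'d::finite \<Rightarrow> real) \<Rightarrow> bool" where
  "admissible_zeta \<zeta> \<longleftrightarrow>
     bounded (range \<zeta>) \<and> (\<exists>L. L-lipschitz_on UNIV \<zeta>)
   \<and> compact (closure {x. \<zeta> x \<noteq> 0})
   \<and> (\<forall>x (a::real) (b::real^'d).
         (\<Sum>\<^sub>\<infinity>\<xi>. \<zeta> (x - lat \<xi>) * (a + b \<bullet> lat \<xi>)) = a + b \<bullet> x)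
   \<and> \<zeta> 0 = 1 \<and> (\<forall>\<xi>. \<xi> \<noteq> (\<lambda>_. 0) \<longrightarrow> \<zeta> (lat \<xi>) = 0)"

definition wbar :: "(real^'d::finite \<Rightarrow> real) \<Rightarrow> (('d \<Rightarrow> int) \<Rightarrow> real^'m::finite)
     \<Rightarrow> real^'d \<Rightarrow> real^'m" where
  "wbar \<zeta> w x = (\<Sum>\<^sub>\<infinity>\<xi>. \<zeta> (x - lat \<xi>) *\<^sub>R w \<xi>)"

definition wtilde :: "(real^'d::finite \<Rightarrow> real) \<Rightarrow> (('d \<Rightarrow> int) \<Rightarrow> real^'m::finite)
     \<Rightarrow> real^'d \<Rightarrow> real^'m" where
  "wtilde \<zeta> w x = integral UNIV (\<lambda>y. \<zeta> (x - y) *\<^sub>R wbar \<zeta> w y)"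

definition cubic_poly :: "(real^'d::finite \<Rightarrow> real^'m::finite) \<Rightarrow> bool" where
  "cubic_poly p \<longleftrightarrow> (\<exists>(c0::real^'m) c1 c2 c3. \<forall>x.
     p x = c0 + (\<Sum>i\<in>UNIV. (x$i) *\<^sub>R c1 i)
             + (\<Sum>i\<in>UNIV. \<Sum>j\<in>UNIV. (x$i * x$j) *\<^sub>R c2 i j)
             + (\<Sum>i\<in>UNIV. \<Sum>j\<in>UNIV. \<Sum>k\<in>UNIV. (x$i * x$j * x$k) *\<^sub>R c3 i j k))"

end

theory Submission
  imports Defs
begin


lemma lat_nth[simp]: "lat \<xi> $ i = of_int (\<xi> i)"
  by (simp add: lat_def)

definition Bx :: "int \<Rightarrow> ('d::finite \<Rightarrow> int) set" where
  "Bx N = {\<xi>. \<forall>i. \<bar>\<xi> i\<bar> \<le> N}"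

lemma finite_Bx: "finite (Bx N :: ('d::finite \<Rightarrow> int) set)"
proof -
  have "Bx N \<subseteq> Pi\<^sub>E UNIV (\<lambda>_. {-N..N})"
    by (auto simp: Bx_def PiE_UNIV_domain abs_le_iff minus_le_iff)
  moreover have "finite (Pi\<^sub>E (UNIV::'d set) (\<lambda>_. {-N..N}))"
    by (rule finite_PiE) auto
  ultimately show ?thesis by (rule finite_subset)
qed

lemma infsum_fin:
  assumes "finite F" "\<And>x. x \<notin> F \<Longrightarrow> f x = 0"
  shows "(\<Sum>\<^sub>\<infinity>x. f x) = sum f F"
proof -
  have "(\<Sum>\<^sub>\<infinity>x. f x) = (\<Sum>\<^sub>\<infinity>x\<in>F. f x)"
    by (rule infsum_cong_neutral) (use assms in auto)
  also have "\<dots> = sum f F" using assms(1) by simp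
  finally show ?thesis .
qed

lemma aff_UNIV:
  fixes f :: "'a::euclidean_space \<Rightarrow> real"
  assumes f: "f integrable_on UNIV" and z: "\<And>x. x \<notin> cbox a b \<Longrightarrow> f x = 0" and m: "\<bar>m\<bar> = 1"
  shows "((\<lambda>x. f (m *\<^sub>R x + c)) has_integral integral UNIV f) UNIV"
proof -
  have fi: "(f has_integral integral (cbox a b) f) (cbox a b)"
    using integrable_on_subcbox[OF f] by (simp add: has_integral_integral)
  have eq: "integral UNIV f = integral (cbox a b) f"
    using has_integral_on_superset[OF fi z] by (simp add: integral_unique)
  have m0: "m \<noteq> 0" using m by auto
  have "((\<lambda>x. f (m *\<^sub>R x + c)) has_integral integral (cbox a b) f)
      ((\<lambda>x. (1 / m) *\<^sub>R x + -((1 / m) *\<^sub>R c)) ` cbox a b)"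
    using has_integral_affinity[OF fi m0, of c] m by simp
  then show ?thesis unfolding eq
  proof (rule has_integral_on_superset)
    fix x assume "x \<notin> (\<lambda>x. (1 / m) *\<^sub>R x + -((1 / m) *\<^sub>R c)) ` cbox a b"
    then have "m *\<^sub>R x + c \<notin> cbox a b"
      using m0 by (auto simp: image_iff algebra_simps intro!: bexI[of _ "m *\<^sub>R x + c"])
    then show "f (m *\<^sub>R x + c) = 0" by (rule z)
  qed auto
qed


definition C0 :: "(real^'d::finite) set" where
  "C0 = {z. \<forall>i. \<lfloor>z $ i\<rfloor> = 0}"

lemma hyp1: "negligible {x::real^'d::finite. x $ k = c}"
proof -
  have "{x::real^'d. x $ k = c} = {x. x \<bullet> axis k 1 = c}" by (simp add: cart_eq_inner_axis)
  moreover have "negligible {x::real^'d. x \<bullet> axis k 1 = c}"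
    by (rule negligible_standard_hyperplane) simp
  ultimately show ?thesis by simp
qed

lemma C0_sub: "C0 \<subseteq> cbox 0 (1::real^'d::finite)"
  by (auto simp: C0_def mem_box_cart floor_eq_iff less_imp_le)

lemma negC: "negligible ((cbox 0 (1::real^'d::finite) - C0) \<union> (C0 - cbox 0 1))"
proof (rule negligible_subset)
  show "negligible (\<Union>((\<lambda>k. {x::real^'d. x $ k = 1}) ` UNIV))"
    by (rule negligible_Union) (auto intro: hyp1)
  show "(cbox 0 (1::real^'d) - C0) \<union> (C0 - cbox 0 1) \<subseteq> \<Union>((\<lambda>k. {x::real^'d. x $ k = 1}) ` UNIV)"
  proof
    fix x :: "real^'d" assume "x \<in> (cbox 0 1 - C0) \<union> (C0 - cbox 0 1)"
    then have "x \<in> cbox 0 1" "x \<notin> C0" using C0_sub by auto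
    then obtain k where "0 \<le> x $ k" "x $ k \<le> 1" "\<lfloor>x $ k\<rfloor> \<noteq> 0"
      by (auto simp: C0_def mem_box_cart)
    then have "x $ k = 1" by (cases "x $ k < 1") (auto simp: floor_eq_iff)
    then show "x \<in> \<Union>((\<lambda>k. {x::real^'d. x $ k = 1}) ` UNIV)" by auto
  qed
qed

lemma intC:
  fixes g :: "real^'d::finite \<Rightarrow> real"
  assumes "continuous_on UNIV g"
  shows "((\<lambda>z. if z \<in> C0 then g z else 0) has_integral integral (cbox 0 1) g) UNIV"
proof -
  have "(g has_integral integral (cbox 0 1) g) (cbox 0 1)"
    using integrable_continuous[OF continuous_on_subset[OF assms]] by (simp add: has_integral_integral)
  then have "(g has_integral integral (cbox 0 1) g) C0"
  proof (subst has_integral_spike_set_eq[symmetric])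
    show "negligible {x \<in> cbox 0 1 - C0. g x \<noteq> 0}" by (rule negligible_subset[OF negC]) auto
    show "negligible {x \<in> C0 - cbox 0 1. g x \<noteq> 0}" by (rule negligible_subset[OF negC]) auto
  qed
  then show ?thesis by (simp add: has_integral_restrict_UNIV)
qed


definition Wc :: "real^'m::finite \<Rightarrow> ('d::finite \<Rightarrow> real^'m) \<Rightarrow> ('d \<Rightarrow> 'd \<Rightarrow> real^'m) \<Rightarrow> ('d \<Rightarrow> 'd \<Rightarrow> 'd \<Rightarrow> real^'m) \<Rightarrow> real^'d \<Rightarrow> real^'m" where
  "Wc e0 e1 c2 c3 y = e0 + (\<Sum>i\<in>UNIV. (y$i) *\<^sub>R e1 i)
             + (\<Sum>i\<in>UNIV. \<Sum>j\<in>UNIV. (y$i * y$j) *\<^sub>R c2 i j)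
             + (\<Sum>i\<in>UNIV. \<Sum>j\<in>UNIV. \<Sum>k\<in>UNIV. (y$i * y$j * y$k) *\<^sub>R c3 i j k)"


lemma swap12: "(\<Sum>i\<in>(UNIV::'a::finite set). \<Sum>j\<in>(UNIV::'b::finite set). \<Sum>k\<in>(UNIV::'c::finite set). f i j k)
   = (\<Sum>j\<in>UNIV. \<Sum>i\<in>UNIV. \<Sum>k\<in>UNIV. (f i j k :: 'v::comm_monoid_add))"
  by (rule sum.swap)

lemma swap3: "(\<Sum>i\<in>(UNIV::'a::finite set). \<Sum>j\<in>(UNIV::'b::finite set). \<Sum>k\<in>(UNIV::'c::finite set). f i j k)
   = (\<Sum>k\<in>UNIV. \<Sum>i\<in>UNIV. \<Sum>j\<in>UNIV. (f i j k :: 'v::comm_monoid_add))"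
proof -
  have "(\<Sum>i\<in>(UNIV::'a set). \<Sum>j\<in>(UNIV::'b set). \<Sum>k\<in>(UNIV::'c set). f i j k)
     = (\<Sum>i\<in>UNIV. \<Sum>k\<in>UNIV. \<Sum>j\<in>UNIV. f i j k)"
    by (rule sum.cong[OF refl], rule sum.swap)
  also have "\<dots> = (\<Sum>k\<in>UNIV. \<Sum>i\<in>UNIV. \<Sum>j\<in>UNIV. f i j k)" by (rule sum.swap)
  finally show ?thesis .
qed

lemma ALG:
  fixes x :: "real^'d::finite" and c0 :: "'v::real_vector" and M2 :: "'d \<Rightarrow> 'd \<Rightarrow> real"
    and M3 :: "'d \<Rightarrow> 'd \<Rightarrow> 'd \<Rightarrow> real" and c3 :: "'d \<Rightarrow> 'd \<Rightarrow> 'd \<Rightarrow> 'v"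
    and c2 :: "'d \<Rightarrow> 'd \<Rightarrow> 'v" and c1 e1 :: "'d \<Rightarrow> 'v"
  defines "D1 \<equiv> \<lambda>l. \<Sum>j\<in>UNIV. \<Sum>k\<in>UNIV. (2 * M2 j k) *\<^sub>R c3 l j k"
      and "D2 \<equiv> \<lambda>l. \<Sum>i\<in>UNIV. \<Sum>k\<in>UNIV. (2 * M2 i k) *\<^sub>R c3 i l k"
      and "D3 \<equiv> \<lambda>l. \<Sum>i\<in>UNIV. \<Sum>j\<in>UNIV. (2 * M2 i j) *\<^sub>R c3 i j l"
  assumes e0: "e0 = c0 - (\<Sum>i\<in>UNIV. \<Sum>j\<in>UNIV. (2 * M2 i j) *\<^sub>R c2 i j) + (\<Sum>i\<in>UNIV. \<Sum>j\<in>UNIV. \<Sum>k\<in>UNIV. (2 * M3 i j k) *\<^sub>R c3 i j k)"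
      and e1: "\<And>l. e1 l = c1 l - D1 l - D2 l - D3 l"
  shows "e0 + (\<Sum>i\<in>UNIV. (x$i) *\<^sub>R e1 i)
     + (\<Sum>i\<in>UNIV. \<Sum>j\<in>UNIV. (x$i * x$j + 2 * M2 i j) *\<^sub>R c2 i j)
     + (\<Sum>i\<in>UNIV. \<Sum>j\<in>UNIV. \<Sum>k\<in>UNIV. (x$i * x$j * x$k + 2 * (x$i * M2 j k + x$j * M2 i k + x$k * M2 i j) - 2 * M3 i j k) *\<^sub>R c3 i j k)
   = c0 + (\<Sum>i\<in>UNIV. (x$i) *\<^sub>R c1 i)
             + (\<Sum>i\<in>UNIV. \<Sum>j\<in>UNIV. (x$i * x$j) *\<^sub>R c2 i j)
             + (\<Sum>i\<in>UNIV. \<Sum>j\<in>UNIV. \<Sum>k\<in>UNIV. (x$i * x$j * x$k) *\<^sub>R c3 i j k)"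
proof -
  define X1 where "X1 = (\<Sum>i\<in>UNIV. (x$i) *\<^sub>R c1 i)"
  define X2 where "X2 = (\<Sum>i\<in>UNIV. \<Sum>j\<in>UNIV. (x$i * x$j) *\<^sub>R c2 i j)"
  define X3 where "X3 = (\<Sum>i\<in>UNIV. \<Sum>j\<in>UNIV. \<Sum>k\<in>UNIV. (x$i * x$j * x$k) *\<^sub>R c3 i j k)"
  define N2 where "N2 = (\<Sum>i\<in>UNIV. \<Sum>j\<in>UNIV. (2 * M2 i j) *\<^sub>R c2 i j)"
  define N3 where "N3 = (\<Sum>i\<in>UNIV. \<Sum>j\<in>UNIV. \<Sum>k\<in>UNIV. (2 * M3 i j k) *\<^sub>R c3 i j k)"
  define Y1 where "Y1 = (\<Sum>l\<in>UNIV. (x$l) *\<^sub>R D1 l)"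
  define Y2 where "Y2 = (\<Sum>l\<in>UNIV. (x$l) *\<^sub>R D2 l)"
  define Y3 where "Y3 = (\<Sum>l\<in>UNIV. (x$l) *\<^sub>R D3 l)"
  have a1: "(\<Sum>i\<in>UNIV. (x$i) *\<^sub>R e1 i) = X1 - Y1 - Y2 - Y3"
    unfolding e1 X1_def Y1_def Y2_def Y3_def by (simp add: scaleR_diff_right sum_subtractf)
  have a2: "(\<Sum>i\<in>UNIV. \<Sum>j\<in>UNIV. (x$i * x$j + 2 * M2 i j) *\<^sub>R c2 i j) = X2 + N2"
    unfolding X2_def N2_def by (simp add: scaleR_add_left sum.distrib)
  have y1: "(\<Sum>i\<in>UNIV. \<Sum>j\<in>UNIV. \<Sum>k\<in>UNIV. (x$i * (2 * M2 j k)) *\<^sub>R c3 i j k) = Y1"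
    unfolding Y1_def D1_def by (simp add: scaleR_sum_right)
  have y2: "(\<Sum>i\<in>UNIV. \<Sum>j\<in>UNIV. \<Sum>k\<in>UNIV. (x$j * (2 * M2 i k)) *\<^sub>R c3 i j k) = Y2"
    unfolding Y2_def D2_def by (subst swap12) (simp add: scaleR_sum_right)
  have y3: "(\<Sum>i\<in>UNIV. \<Sum>j\<in>UNIV. \<Sum>k\<in>UNIV. (x$k * (2 * M2 i j)) *\<^sub>R c3 i j k) = Y3"
    unfolding Y3_def D3_def by (subst swap3) (simp add: scaleR_sum_right)
  have a3: "(\<Sum>i\<in>UNIV. \<Sum>j\<in>UNIV. \<Sum>k\<in>UNIV. (x$i * x$j * x$k + 2 * (x$i * M2 j k + x$j * M2 i k + x$k * M2 i j) - 2 * M3 i j k) *\<^sub>R c3 i j k)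
     = X3 + Y1 + Y2 + Y3 - N3"
    unfolding X3_def N3_def y1[symmetric] y2[symmetric] y3[symmetric]
    by (simp add: algebra_simps sum.distrib sum_subtractf)
  show ?thesis unfolding a1 a2 a3 e0 X1_def[symmetric] X2_def[symmetric] X3_def[symmetric]
      N2_def[symmetric] N3_def[symmetric]
    by (simp add: algebra_simps)
qed




context
  fixes \<zeta> :: "real^'d::finite \<Rightarrow> real"
  assumes adm: "admissible_zeta \<zeta>"
begin

lemma zc: "continuous_on UNIV \<zeta>"
proof -
  obtain L where "L-lipschitz_on UNIV \<zeta>" using adm unfolding admissible_zeta_def by blast
  then show ?thesis by (rule lipschitz_on_continuous_on)
qed

lemma zc2[continuous_intros]: "continuous_on S f \<Longrightarrow> continuous_on S (\<lambda>x. \<zeta> (f x))"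
  by (rule continuous_on_compose2[OF zc]) auto

lemma Z3: "(\<Sum>\<^sub>\<infinity>\<xi>. \<zeta> (x - lat \<xi>) * (a + b \<bullet> lat \<xi>)) = a + b \<bullet> x"
proof -
  have "\<forall>x (a::real) (b::real^'d). (\<Sum>\<^sub>\<infinity>\<xi>. \<zeta> (x - lat \<xi>) * (a + b \<bullet> lat \<xi>)) = a + b \<bullet> x"
    using adm unfolding admissible_zeta_def by (elim conjE)
  then show ?thesis by blast
qed

lemma supp_ex: "\<exists>R>0. \<forall>x. \<zeta> x \<noteq> 0 \<longrightarrow> norm x \<le> R"
proof -
  have "bounded (closure {x. \<zeta> x \<noteq> 0})"
  proof -
    have "compact (closure {x. \<zeta> x \<noteq> 0})" using adm unfolding admissible_zeta_def by (elim conjE)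
    then show ?thesis by (rule compact_imp_bounded)
  qed
  then obtain B where "B > 0" "\<forall>x\<in>closure {x. \<zeta> x \<noteq> 0}. norm x \<le> B"
    by (auto simp: bounded_pos)
  then show ?thesis using closure_subset[of "{x. \<zeta> x \<noteq> 0}"] by blast
qed

definition "Rz = (SOME R. R > 0 \<and> (\<forall>x. \<zeta> x \<noteq> 0 \<longrightarrow> norm x \<le> R))"

lemma Rz: "Rz > 0" "\<zeta> x \<noteq> 0 \<Longrightarrow> norm x \<le> Rz"
  using someI_ex[OF supp_ex] unfolding Rz_def by auto

lemma near:
  assumes "norm u \<le> r" "\<zeta> (u - lat \<xi>) \<noteq> 0"
  shows "\<xi> \<in> Bx \<lceil>r + Rz\<rceil>"
proof -
  have n: "norm (u - lat \<xi>) \<le> Rz" using Rz(2)[OF assms(2)] .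
  have "\<bar>\<xi> i\<bar> \<le> \<lceil>r + Rz\<rceil>" for i
  proof -
    have "\<bar>(u - lat \<xi>) $ i\<bar> \<le> Rz" using component_le_norm_cart[of "u - lat \<xi>" i] n by linarith
    moreover have "\<bar>u $ i\<bar> \<le> r" using component_le_norm_cart[of u i] assms(1) by linarith
    ultimately have "\<bar>real_of_int (\<xi> i)\<bar> \<le> r + Rz" by simp
    then show ?thesis by linarith
  qed
  then show ?thesis by (simp add: Bx_def)
qed

lemma isf:
  assumes "norm u \<le> r"
  shows "(\<Sum>\<^sub>\<infinity>\<xi>. \<zeta> (u - lat \<xi>) * H \<xi>) = (\<Sum>\<xi>\<in>Bx \<lceil>r + Rz\<rceil>. \<zeta> (u - lat \<xi>) * H \<xi>)"
  by (rule infsum_fin) (use near[OF assms] finite_Bx in auto)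

lemma isfv:
  assumes "norm u \<le> r"
  shows "(\<Sum>\<^sub>\<infinity>\<xi>. \<zeta> (u - lat \<xi>) *\<^sub>R (H \<xi> :: 'b::{real_normed_vector,t2_space})) = (\<Sum>\<xi>\<in>Bx \<lceil>r + Rz\<rceil>. \<zeta> (u - lat \<xi>) *\<^sub>R H \<xi>)"
  by (rule infsum_fin) (use near[OF assms] finite_Bx in auto)

lemma pu: "(\<Sum>\<^sub>\<infinity>\<xi>. \<zeta> (u - lat \<xi>) * 1) = 1"
  using Z3[of u 1 0] by simp

lemma fm: "(\<Sum>\<^sub>\<infinity>\<xi>. \<zeta> (u - lat \<xi>) * (u - lat \<xi>) $ l) = 0"
proof -
  have "(\<Sum>\<^sub>\<infinity>\<xi>. \<zeta> (u - lat \<xi>) * (u $ l + (- axis l 1) \<bullet> lat \<xi>)) = u $ l + (- axis l 1) \<bullet> u"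
    by (rule Z3)
  then show ?thesis by (simp add: inner_axis')
qed

lemma supp_box: "\<zeta> v \<noteq> 0 \<Longrightarrow> v \<in> cbox (- (\<chi> i. Rz)) (\<chi> i. Rz)"
proof -
  assume h: "\<zeta> v \<noteq> 0"
  have "\<bar>v $ i\<bar> \<le> Rz" for i using Rz(2)[OF h] component_le_norm_cart[of v i] by linarith
  then show ?thesis by (simp add: mem_box_cart abs_le_iff minus_le_iff)
qed

lemma INTC:
  assumes "continuous_on UNIV g"
  shows "(\<lambda>v. \<zeta> v * g v) integrable_on UNIV"
proof (rule integrable_on_superset)
  show "(\<lambda>v. \<zeta> v * g v) integrable_on cbox (- (\<chi> i. Rz)) (\<chi> i. Rz)"
    by (rule integrable_continuous) (intro continuous_intros continuous_on_subset[OF assms] continuous_on_subset[OF zc]; simp)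
  show "\<And>x. x \<notin> cbox (- (\<chi> i. Rz)) (\<chi> i. Rz) \<Longrightarrow> \<zeta> x * g x = 0"
    using supp_box by force
qed auto

lemma AFFZ:
  assumes "continuous_on UNIV g" "\<bar>m\<bar> = 1"
  shows "integral UNIV (\<lambda>x. \<zeta> (m *\<^sub>R x + c) * g (m *\<^sub>R x + c)) = integral UNIV (\<lambda>v. \<zeta> v * g v)"
  using aff_UNIV[OF INTC[OF assms(1)] _ assms(2), of "- (\<chi> i. Rz)" "\<chi> i. Rz" c] supp_box
  by (force intro: integral_unique)


definition EpL :: "(real^'d \<Rightarrow> real) \<Rightarrow> real \<Rightarrow> real^'d \<Rightarrow> real^'d \<Rightarrow> real" where
  "EpL Q a b u = (\<Sum>\<^sub>\<infinity>\<xi>. \<zeta> (u - lat \<xi>) * (Q (u - lat \<xi>) * (a + b \<bullet> u)))"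

lemma KEY:
  assumes Q: "continuous_on UNIV Q"
  shows "integral UNIV (\<lambda>v. \<zeta> v * EpL Q a b (x - v)) = (a + b \<bullet> x) * integral UNIV (\<lambda>w. \<zeta> w * Q w)"
proof -
  define F where "F = (Bx \<lceil>(norm x + Rz) + Rz\<rceil> :: ('d \<Rightarrow> int) set)"
  have fF: "finite F" using finite_Bx F_def by simp
  define g where "g \<xi> v = \<zeta> (x - v - lat \<xi>) * (Q (x - v - lat \<xi>) * (a + b \<bullet> (x - v)))" for \<xi> v
  have Qc: "continuous_on S (\<lambda>v. Q (f v))" if "continuous_on S f" for S and f :: "real^'d \<Rightarrow> real^'d"
    by (rule continuous_on_compose2[OF Q that]) auto
  have 1: "\<zeta> v * EpL Q a b (x - v) = (\<Sum>\<xi>\<in>F. \<zeta> v * g \<xi> v)" for v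
  proof (cases "\<zeta> v = 0")
    case True thus ?thesis by simp
  next
    case False
    have "norm (x - v) \<le> norm x + Rz" using Rz(2)[OF False] norm_triangle_ineq4[of x v] by linarith
    from isf[OF this] show ?thesis by (simp add: EpL_def F_def g_def sum_distrib_left)
  qed
  have gc: "continuous_on UNIV (g \<xi>)" for \<xi> unfolding g_def by (intro continuous_intros Qc)
  have 2: "integral UNIV (\<lambda>v. \<zeta> v * EpL Q a b (x - v)) = (\<Sum>\<xi>\<in>F. integral UNIV (\<lambda>v. \<zeta> v * g \<xi> v))"
    unfolding 1 using fF by (subst integral_sum) (auto intro: INTC gc)
  define h where "h \<xi> w = Q w * (\<zeta> (x - w - lat \<xi>) * (a + b \<bullet> (w + lat \<xi>)))" for \<xi> w
  have hc: "continuous_on UNIV (h \<xi>)" for \<xi> unfolding h_def by (intro continuous_intros Q)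
  have 3: "integral UNIV (\<lambda>v. \<zeta> v * g \<xi> v) = integral UNIV (\<lambda>w. \<zeta> w * h \<xi> w)" for \<xi>
  proof -
    have "integral UNIV (\<lambda>v. \<zeta> v * g \<xi> v) = integral UNIV (\<lambda>w. \<zeta> ((-1) *\<^sub>R w + (x - lat \<xi>)) * g \<xi> ((-1) *\<^sub>R w + (x - lat \<xi>)))"
      using AFFZ[OF gc, of "-1" "x - lat \<xi>"] by simp
    also have "\<dots> = integral UNIV (\<lambda>w. \<zeta> w * h \<xi> w)"
    proof (rule arg_cong[where f="integral UNIV"], rule ext)
      fix w
      have e1: "x - ((-1) *\<^sub>R w + (x - lat \<xi>)) - lat \<xi> = w" by (simp add: algebra_simps)
      have e2: "(-1) *\<^sub>R w + (x - lat \<xi>) = x - w - lat \<xi>" by (simp add: algebra_simps)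
      have e3: "x - ((-1) *\<^sub>R w + (x - lat \<xi>)) = w + lat \<xi>" by (simp add: algebra_simps)
      show "\<zeta> ((-1) *\<^sub>R w + (x - lat \<xi>)) * g \<xi> ((-1) *\<^sub>R w + (x - lat \<xi>)) = \<zeta> w * h \<xi> w"
        unfolding g_def h_def e1 e3 by (simp only: e2) (simp add: algebra_simps)
    qed
    finally show ?thesis .
  qed
  have 4: "(\<Sum>\<xi>\<in>F. integral UNIV (\<lambda>w. \<zeta> w * h \<xi> w)) = integral UNIV (\<lambda>w. \<Sum>\<xi>\<in>F. \<zeta> w * h \<xi> w)"
    using fF by (subst integral_sum) (auto intro: INTC hc)
  have 5: "(\<Sum>\<xi>\<in>F. \<zeta> w * h \<xi> w) = (a + b \<bullet> x) * (\<zeta> w * Q w)" for w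
  proof (cases "\<zeta> w = 0")
    case True thus ?thesis by simp
  next
    case False
    have n: "norm (x - w) \<le> norm x + Rz" using Rz(2)[OF False] norm_triangle_ineq4[of x w] by linarith
    have "(\<Sum>\<^sub>\<infinity>\<xi>. \<zeta> (x - w - lat \<xi>) * ((a + b \<bullet> w) + b \<bullet> lat \<xi>)) = (a + b \<bullet> w) + b \<bullet> (x - w)"
      by (rule Z3)
    then have "(\<Sum>\<xi>\<in>F. \<zeta> (x - w - lat \<xi>) * ((a + b \<bullet> w) + b \<bullet> lat \<xi>)) = a + b \<bullet> x"
      unfolding isf[OF n] F_def by (simp add: inner_diff_right)
    note S = this
    have "(\<Sum>\<xi>\<in>F. \<zeta> w * h \<xi> w) = (\<Sum>\<xi>\<in>F. (\<zeta> w * Q w) * (\<zeta> (x - w - lat \<xi>) * ((a + b \<bullet> w) + b \<bullet> lat \<xi>)))"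
      by (rule sum.cong) (simp_all add: h_def inner_add_right algebra_simps)
    also have "\<dots> = (\<zeta> w * Q w) * (a + b \<bullet> x)"
      by (simp only: sum_distrib_left[symmetric] S)
    finally show ?thesis by simp
  qed
  show ?thesis unfolding 2 3 4 5 by simp
qed


lemma CELL: "integral UNIV \<zeta> = 1"
proof -
  define F where "F = (Bx (\<lceil>Rz\<rceil> + 1) :: ('d \<Rightarrow> int) set)"
  have fF: "finite F" using finite_Bx F_def by simp
  define G where "G \<xi> z = (if z \<in> C0 then \<zeta> (z - lat \<xi>) else 0)" for \<xi> z
  have Gi: "(G \<xi> has_integral integral (cbox 0 1) (\<lambda>z. \<zeta> (z - lat \<xi>))) UNIV" for \<xi>
    unfolding G_def by (rule intC) (intro continuous_intros)
  have Gz: "z \<notin> cbox 0 1 \<Longrightarrow> G \<xi> z = 0" for \<xi> z using C0_sub G_def by auto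
  have T: "((\<lambda>y. G \<xi> (1 *\<^sub>R y + lat \<xi>)) has_integral integral UNIV (G \<xi>)) UNIV" for \<xi>
    by (rule aff_UNIV[OF _ Gz]) (use Gi in auto)
  have GT: "G \<xi> (y + lat \<xi>) = (if \<xi> = (\<lambda>i. - \<lfloor>y $ i\<rfloor>) then \<zeta> y else 0)" for \<xi> y
  proof -
    have "(y + lat \<xi> \<in> C0) = (\<xi> = (\<lambda>i. - \<lfloor>y $ i\<rfloor>))"
      by (auto simp: C0_def fun_eq_iff floor_add_int[symmetric] algebra_simps) (metis add.commute add_eq_0_iff2)
    then show ?thesis by (simp add: G_def)
  qed
  have A: "\<zeta> y = (\<Sum>\<xi>\<in>F. G \<xi> (1 *\<^sub>R y + lat \<xi>))" for y
  proof (cases "\<zeta> y = 0")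
    case True then show ?thesis by (auto simp: GT intro!: sum.neutral)
  next
    case False
    have "\<bar>- \<lfloor>y $ i\<rfloor>\<bar> \<le> \<lceil>Rz\<rceil> + 1" for i
    proof -
      have "\<bar>y $ i\<bar> \<le> Rz" using Rz(2)[OF False] component_le_norm_cart[of y i] by linarith
      then show ?thesis by linarith
    qed
    then have "(\<lambda>i. - \<lfloor>y $ i\<rfloor>) \<in> F" by (simp add: F_def Bx_def)
    then show ?thesis by (simp add: GT sum.delta[OF fF])
  qed
  have "(\<zeta> has_integral (\<Sum>\<xi>\<in>F. integral UNIV (G \<xi>))) UNIV"
    unfolding A[abs_def] by (rule has_integral_sum[OF fF T])
  then have 1: "integral UNIV \<zeta> = (\<Sum>\<xi>\<in>F. integral UNIV (G \<xi>))" by (rule integral_unique)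
  have "((\<lambda>z. \<Sum>\<xi>\<in>F. G \<xi> z) has_integral (\<Sum>\<xi>\<in>F. integral UNIV (G \<xi>))) UNIV"
    by (rule has_integral_sum[OF fF]) (use Gi in \<open>auto simp: has_integral_integral integral_unique\<close>)
  moreover have "(\<lambda>z. \<Sum>\<xi>\<in>F. G \<xi> z) = (\<lambda>z. if z \<in> C0 then 1 else 0)"
  proof
    fix z show "(\<Sum>\<xi>\<in>F. G \<xi> z) = (if z \<in> C0 then 1 else 0)"
    proof (cases "z \<in> C0")
      case False then show ?thesis by (simp add: G_def)
    next
      case True
      have "(\<Sum>\<^sub>\<infinity>\<xi>. \<zeta> (z - lat \<xi>) * 1) = (\<Sum>\<xi>\<in>F. \<zeta> (z - lat \<xi>) * 1)"
      proof (rule infsum_fin[OF fF])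
        fix \<xi> assume "\<xi> \<notin> F"
        then obtain i where "\<bar>\<xi> i\<bar> > \<lceil>Rz\<rceil> + 1" by (auto simp: F_def Bx_def not_le)
        moreover have "0 \<le> z $ i" "z $ i < 1" using True by (auto simp: C0_def floor_eq_iff)
        ultimately have "\<bar>(z - lat \<xi>) $ i\<bar> > Rz" by simp linarith
        then have "norm (z - lat \<xi>) > Rz" using component_le_norm_cart[of "z - lat \<xi>" i] by linarith
        then show "\<zeta> (z - lat \<xi>) * 1 = 0" using Rz(2) by force
      qed
      then show ?thesis using True pu by (simp add: G_def)
    qed
  qed
  ultimately have "((\<lambda>z::real^'d. if z \<in> C0 then 1 else 0) has_integral (\<Sum>\<xi>\<in>F. integral UNIV (G \<xi>))) UNIV" by (simp only:)
  moreover have "((\<lambda>z::real^'d. if z \<in> C0 then 1 else 0) has_integral (1::real)) UNIV"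
  proof -
    have "(0::real^'d) \<in> cbox 0 1" by (simp add: mem_box_cart)
    then have "Henstock_Kurzweil_Integration.content (cbox 0 (1::real^'d)) = 1" by (subst content_cbox_cart) auto
    then show ?thesis using intC[of "\<lambda>_::real^'d. 1::real"] by simp
  qed
  ultimately show ?thesis using 1 has_integral_unique by metis
qed


definition Sg :: "(('d \<Rightarrow> int) \<Rightarrow> real) \<Rightarrow> real^'d \<Rightarrow> real" where
  "Sg f u = (\<Sum>\<^sub>\<infinity>\<xi>. \<zeta> (u - lat \<xi>) * f \<xi>)"

lemmas isf0 = isf[OF order_refl]

lemma PF: "(\<Sum>\<xi>\<in>Bx \<lceil>norm u + Rz\<rceil>. \<zeta> (u - lat \<xi>)) = 1"
  using pu[of u] unfolding isf0 by simp

lemma MF: "(\<Sum>\<xi>\<in>Bx \<lceil>norm u + Rz\<rceil>. \<zeta> (u - lat \<xi>) * (u - lat \<xi>) $ l) = 0"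
  using fm[of u l] unfolding isf0 .

lemma SI0: "Sg (\<lambda>_. c) u = c"
  unfolding Sg_def isf0 by (simp add: sum_distrib_right[symmetric] PF)

lemma SI1: "Sg (\<lambda>\<xi>. lat \<xi> $ l) u = u $ l"
proof -
  define F where "F = (Bx \<lceil>norm u + Rz\<rceil> :: ('d \<Rightarrow> int) set)"
  define z where "z \<xi> = \<zeta> (u - lat \<xi>)" for \<xi>
  define w where "w \<xi> = u - lat \<xi>" for \<xi>
  have P: "(\<Sum>\<xi>\<in>F. z \<xi>) = 1" using PF unfolding F_def z_def .
  have M: "(\<Sum>\<xi>\<in>F. z \<xi> * w \<xi> $ l) = 0" for l using MF unfolding F_def z_def w_def .
  have "Sg (\<lambda>\<xi>. lat \<xi> $ l) u = (\<Sum>\<xi>\<in>F. z \<xi> * lat \<xi> $ l)" unfolding Sg_def isf0 F_def z_def ..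
  also have "\<dots> = (\<Sum>\<xi>\<in>F. u $ l * z \<xi> - z \<xi> * w \<xi> $ l)"
    by (rule sum.cong) (simp_all add: w_def algebra_simps)
  also have "\<dots> = u $ l * (\<Sum>\<xi>\<in>F. z \<xi>) - (\<Sum>\<xi>\<in>F. z \<xi> * w \<xi> $ l)"
    by (simp only: sum_subtractf sum_distrib_left)
  finally show ?thesis unfolding P M by simp
qed

lemma SI2: "Sg (\<lambda>\<xi>. lat \<xi> $ i * lat \<xi> $ j) u = u $ i * u $ j + EpL (\<lambda>w. w $ i * w $ j) 1 0 u"
proof -
  define F where "F = (Bx \<lceil>norm u + Rz\<rceil> :: ('d \<Rightarrow> int) set)"
  define z where "z \<xi> = \<zeta> (u - lat \<xi>)" for \<xi>
  define w where "w \<xi> = u - lat \<xi>" for \<xi>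
  have P: "(\<Sum>\<xi>\<in>F. z \<xi>) = 1" using PF unfolding F_def z_def .
  have M: "(\<Sum>\<xi>\<in>F. z \<xi> * w \<xi> $ l) = 0" for l using MF unfolding F_def z_def w_def .
  have E: "EpL (\<lambda>w. w $ i * w $ j) 1 0 u = (\<Sum>\<xi>\<in>F. z \<xi> * (w \<xi> $ i * w \<xi> $ j))"
    unfolding EpL_def isf0 F_def z_def w_def by simp
  have "Sg (\<lambda>\<xi>. lat \<xi> $ i * lat \<xi> $ j) u = (\<Sum>\<xi>\<in>F. z \<xi> * (lat \<xi> $ i * lat \<xi> $ j))"
    unfolding Sg_def isf0 F_def z_def ..
  also have "\<dots> = (\<Sum>\<xi>\<in>F. (u $ i * u $ j) * z \<xi> - u $ i * (z \<xi> * w \<xi> $ j) - u $ j * (z \<xi> * w \<xi> $ i)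
       + z \<xi> * (w \<xi> $ i * w \<xi> $ j))"
    by (rule sum.cong) (simp_all add: w_def algebra_simps)
  also have "\<dots> = (u $ i * u $ j) * (\<Sum>\<xi>\<in>F. z \<xi>) - u $ i * (\<Sum>\<xi>\<in>F. z \<xi> * w \<xi> $ j)
      - u $ j * (\<Sum>\<xi>\<in>F. z \<xi> * w \<xi> $ i) + (\<Sum>\<xi>\<in>F. z \<xi> * (w \<xi> $ i * w \<xi> $ j))"
    by (simp only: sum.distrib sum_subtractf sum_distrib_left)
  finally show ?thesis unfolding P M E by simp
qed

lemma SI3: "Sg (\<lambda>\<xi>. lat \<xi> $ i * lat \<xi> $ j * lat \<xi> $ k) u = u $ i * u $ j * u $ k
   + EpL (\<lambda>w. w $ j * w $ k) 0 (axis i 1) u + EpL (\<lambda>w. w $ i * w $ k) 0 (axis j 1) u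
   + EpL (\<lambda>w. w $ i * w $ j) 0 (axis k 1) u - EpL (\<lambda>w. w $ i * w $ j * w $ k) 1 0 u"
proof -
  define F where "F = (Bx \<lceil>norm u + Rz\<rceil> :: ('d \<Rightarrow> int) set)"
  define z where "z \<xi> = \<zeta> (u - lat \<xi>)" for \<xi>
  define w where "w \<xi> = u - lat \<xi>" for \<xi>
  have P: "(\<Sum>\<xi>\<in>F. z \<xi>) = 1" using PF unfolding F_def z_def .
  have M: "(\<Sum>\<xi>\<in>F. z \<xi> * w \<xi> $ l) = 0" for l using MF unfolding F_def z_def w_def .
  have E2: "EpL (\<lambda>w. w $ a * w $ b) 0 (axis c 1) u = u $ c * (\<Sum>\<xi>\<in>F. z \<xi> * (w \<xi> $ a * w \<xi> $ b))" for a b c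
    unfolding EpL_def isf0 F_def z_def w_def by (simp add: sum_distrib_left inner_axis' algebra_simps)
  have E3: "EpL (\<lambda>w. w $ i * w $ j * w $ k) 1 0 u = (\<Sum>\<xi>\<in>F. z \<xi> * (w \<xi> $ i * w \<xi> $ j * w \<xi> $ k))"
    unfolding EpL_def isf0 F_def z_def w_def by simp
  have "Sg (\<lambda>\<xi>. lat \<xi> $ i * lat \<xi> $ j * lat \<xi> $ k) u = (\<Sum>\<xi>\<in>F. z \<xi> * (lat \<xi> $ i * lat \<xi> $ j * lat \<xi> $ k))"
    unfolding Sg_def isf0 F_def z_def ..
  also have "\<dots> = (\<Sum>\<xi>\<in>F. (u $ i * u $ j * u $ k) * z \<xi>
       - (u $ i * u $ j) * (z \<xi> * w \<xi> $ k) - (u $ i * u $ k) * (z \<xi> * w \<xi> $ j) - (u $ j * u $ k) * (z \<xi> * w \<xi> $ i)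
       + u $ i * (z \<xi> * (w \<xi> $ j * w \<xi> $ k)) + u $ j * (z \<xi> * (w \<xi> $ i * w \<xi> $ k))
       + u $ k * (z \<xi> * (w \<xi> $ i * w \<xi> $ j)) - z \<xi> * (w \<xi> $ i * w \<xi> $ j * w \<xi> $ k))"
    by (rule sum.cong) (simp_all add: w_def algebra_simps)
  also have "\<dots> = (u $ i * u $ j * u $ k) * (\<Sum>\<xi>\<in>F. z \<xi>)
       - (u $ i * u $ j) * (\<Sum>\<xi>\<in>F. z \<xi> * w \<xi> $ k) - (u $ i * u $ k) * (\<Sum>\<xi>\<in>F. z \<xi> * w \<xi> $ j)
       - (u $ j * u $ k) * (\<Sum>\<xi>\<in>F. z \<xi> * w \<xi> $ i)
       + u $ i * (\<Sum>\<xi>\<in>F. z \<xi> * (w \<xi> $ j * w \<xi> $ k)) + u $ j * (\<Sum>\<xi>\<in>F. z \<xi> * (w \<xi> $ i * w \<xi> $ k))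
       + u $ k * (\<Sum>\<xi>\<in>F. z \<xi> * (w \<xi> $ i * w \<xi> $ j)) - (\<Sum>\<xi>\<in>F. z \<xi> * (w \<xi> $ i * w \<xi> $ j * w \<xi> $ k))"
    by (simp only: sum.distrib sum_subtractf sum_distrib_left)
  finally show ?thesis unfolding P M E2 E3 by simp
qed


lemma INTE:
  assumes H: "\<And>\<xi>. continuous_on UNIV (H \<xi>)"
  shows "(\<lambda>v. \<zeta> v * (\<Sum>\<^sub>\<infinity>\<xi>. \<zeta> (x - v - lat \<xi>) * H \<xi> v)) integrable_on UNIV"
proof -
  define F where "F = (Bx \<lceil>(norm x + Rz) + Rz\<rceil> :: ('d \<Rightarrow> int) set)"
  have 1: "\<zeta> v * (\<Sum>\<^sub>\<infinity>\<xi>. \<zeta> (x - v - lat \<xi>) * H \<xi> v) = \<zeta> v * (\<Sum>\<xi>\<in>F. \<zeta> (x - v - lat \<xi>) * H \<xi> v)" for v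
  proof (cases "\<zeta> v = 0")
    case True thus ?thesis by simp
  next
    case False
    have "norm (x - v) \<le> norm x + Rz" using Rz(2)[OF False] norm_triangle_ineq4[of x v] by linarith
    from isf[OF this] show ?thesis by (simp add: F_def)
  qed
  show ?thesis unfolding 1 by (intro INTC continuous_intros H)
qed

lemma INTS: "(\<lambda>v. \<zeta> v * Sg f (x - v)) integrable_on UNIV"
  unfolding Sg_def by (rule INTE) simp

lemma INTEp:
  assumes Q: "continuous_on UNIV Q"
  shows "(\<lambda>v. \<zeta> v * EpL Q a b (x - v)) integrable_on UNIV"
proof -
  have Qc: "continuous_on S (\<lambda>v. Q (f v))" if "continuous_on S f" for S and f :: "real^'d \<Rightarrow> real^'d"
    by (rule continuous_on_compose2[OF Q that]) auto
  show ?thesis unfolding EpL_def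
    by (rule INTE[where H="\<lambda>\<xi> v. Q (x - v - lat \<xi>) * (a + b \<bullet> (x - v))"]) (intro continuous_intros Qc)
qed

lemma M1: "integral UNIV (\<lambda>v. \<zeta> v * v $ l) = 0"
proof -
  have "integral UNIV (\<lambda>v. \<zeta> v * EpL (\<lambda>_. 1) 0 (axis l 1) (0 - v)) = (0 + axis l 1 \<bullet> 0) * integral UNIV (\<lambda>w. \<zeta> w * 1)"
    using KEY[of "\<lambda>_. 1" 0 "axis l 1" 0] by simp
  moreover have "EpL (\<lambda>_. 1) 0 (axis l 1) u = u $ l" for u
    using SI0[of "u $ l" u] unfolding EpL_def Sg_def by (simp add: inner_axis')
  ultimately have "integral UNIV (\<lambda>v. -1 * (\<zeta> v * v $ l)) = 0" by simp
  then show ?thesis by (simp only: integral_mult_right)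
qed

definition "M2 i j = integral UNIV (\<lambda>v. \<zeta> v * (v $ i * v $ j))"
definition "M3 i j k = integral UNIV (\<lambda>v. \<zeta> v * (v $ i * v $ j * v $ k))"

lemma hz: "(\<zeta> has_integral 1) UNIV"
  using INTC[of "\<lambda>_. 1"] CELL by (simp add: has_integral_integral)

lemma h1: "((\<lambda>v. \<zeta> v * v $ l) has_integral 0) UNIV"
  using INTC[of "\<lambda>v. v $ l"] M1[of l] by (simp add: has_integral_integral continuous_intros)

lemma h2: "((\<lambda>v. \<zeta> v * (v $ i * v $ j)) has_integral M2 i j) UNIV"
  using INTC[of "\<lambda>v. v $ i * v $ j"] unfolding M2_def by (simp add: has_integral_integral continuous_intros)

lemma h3: "((\<lambda>v. \<zeta> v * (v $ i * v $ j * v $ k)) has_integral M3 i j k) UNIV"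
  using INTC[of "\<lambda>v. v $ i * v $ j * v $ k"] unfolding M3_def by (simp add: has_integral_integral continuous_intros)

lemma P1: "integral UNIV (\<lambda>v. \<zeta> v * (x - v) $ l) = x $ l"
proof -
  have "((\<lambda>v. x $ l * \<zeta> v - \<zeta> v * v $ l) has_integral (x $ l * 1 - 0)) UNIV"
    by (intro has_integral_diff has_integral_mult_right hz h1)
  moreover have "(\<lambda>v. x $ l * \<zeta> v - \<zeta> v * v $ l) = (\<lambda>v. \<zeta> v * (x - v) $ l)"
    by (rule ext) (simp add: algebra_simps)
  ultimately show ?thesis by (simp add: integral_unique)
qed

lemma P2: "integral UNIV (\<lambda>v. \<zeta> v * ((x - v) $ i * (x - v) $ j)) = x $ i * x $ j + M2 i j"
proof -
  have "((\<lambda>v. (x $ i * x $ j) * \<zeta> v - x $ i * (\<zeta> v * v $ j) - x $ j * (\<zeta> v * v $ i) + \<zeta> v * (v $ i * v $ j))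
     has_integral ((x $ i * x $ j) * 1 - x $ i * 0 - x $ j * 0 + M2 i j)) UNIV"
    by (intro has_integral_add has_integral_diff has_integral_mult_right hz h1 h2)
  moreover have "(\<lambda>v. (x $ i * x $ j) * \<zeta> v - x $ i * (\<zeta> v * v $ j) - x $ j * (\<zeta> v * v $ i) + \<zeta> v * (v $ i * v $ j))
      = (\<lambda>v. \<zeta> v * ((x - v) $ i * (x - v) $ j))"
    by (rule ext) (simp add: algebra_simps)
  ultimately show ?thesis by (simp add: integral_unique)
qed

lemma P3: "integral UNIV (\<lambda>v. \<zeta> v * ((x - v) $ i * (x - v) $ j * (x - v) $ k))
   = x $ i * x $ j * x $ k + x $ i * M2 j k + x $ j * M2 i k + x $ k * M2 i j - M3 i j k"
proof -
  have "((\<lambda>v. (x $ i * x $ j * x $ k) * \<zeta> v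
       - (x $ i * x $ j) * (\<zeta> v * v $ k) - (x $ i * x $ k) * (\<zeta> v * v $ j) - (x $ j * x $ k) * (\<zeta> v * v $ i)
       + x $ i * (\<zeta> v * (v $ j * v $ k)) + x $ j * (\<zeta> v * (v $ i * v $ k))
       + x $ k * (\<zeta> v * (v $ i * v $ j)) - \<zeta> v * (v $ i * v $ j * v $ k))
     has_integral ((x $ i * x $ j * x $ k) * 1 - (x $ i * x $ j) * 0 - (x $ i * x $ k) * 0 - (x $ j * x $ k) * 0
       + x $ i * M2 j k + x $ j * M2 i k + x $ k * M2 i j - M3 i j k)) UNIV"
    by (intro has_integral_add has_integral_diff has_integral_mult_right hz h1 h2 h3)
  moreover have "(\<lambda>v. (x $ i * x $ j * x $ k) * \<zeta> v
       - (x $ i * x $ j) * (\<zeta> v * v $ k) - (x $ i * x $ k) * (\<zeta> v * v $ j) - (x $ j * x $ k) * (\<zeta> v * v $ i)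
       + x $ i * (\<zeta> v * (v $ j * v $ k)) + x $ j * (\<zeta> v * (v $ i * v $ k))
       + x $ k * (\<zeta> v * (v $ i * v $ j)) - \<zeta> v * (v $ i * v $ j * v $ k))
      = (\<lambda>v. \<zeta> v * ((x - v) $ i * (x - v) $ j * (x - v) $ k))"
    by (rule ext) (simp add: algebra_simps)
  ultimately show ?thesis by (simp add: integral_unique)
qed

definition "Ts f x = integral UNIV (\<lambda>v. \<zeta> v * Sg f (x - v))"

lemma T0: "Ts (\<lambda>_. c) x = c"
  unfolding Ts_def SI0 using CELL by simp

lemma T1: "Ts (\<lambda>\<xi>. lat \<xi> $ l) x = x $ l"
  unfolding Ts_def SI1 by (rule P1)

lemma T2: "Ts (\<lambda>\<xi>. lat \<xi> $ i * lat \<xi> $ j) x = x $ i * x $ j + 2 * M2 i j"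
proof -
  have c: "continuous_on UNIV (\<lambda>w::real^'d. w $ i * w $ j)" by (intro continuous_intros)
  have "Ts (\<lambda>\<xi>. lat \<xi> $ i * lat \<xi> $ j) x = integral UNIV (\<lambda>v. \<zeta> v * ((x - v) $ i * (x - v) $ j)
      + \<zeta> v * EpL (\<lambda>w. w $ i * w $ j) 1 0 (x - v))"
    unfolding Ts_def SI2 by (simp add: distrib_left)
  also have "\<dots> = integral UNIV (\<lambda>v. \<zeta> v * ((x - v) $ i * (x - v) $ j))
      + integral UNIV (\<lambda>v. \<zeta> v * EpL (\<lambda>w. w $ i * w $ j) 1 0 (x - v))"
    by (rule integral_add) (intro INTC continuous_intros, rule INTEp[OF c])
  also have "\<dots> = x $ i * x $ j + 2 * M2 i j"
    unfolding P2 KEY[OF c] M2_def by simp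
  finally show ?thesis .
qed

lemma T3: "Ts (\<lambda>\<xi>. lat \<xi> $ i * lat \<xi> $ j * lat \<xi> $ k) x
   = x $ i * x $ j * x $ k + 2 * (x $ i * M2 j k + x $ j * M2 i k + x $ k * M2 i j) - 2 * M3 i j k"
proof -
  have c: "continuous_on UNIV (\<lambda>w::real^'d. w $ a * w $ b)" for a b by (intro continuous_intros)
  have c3: "continuous_on UNIV (\<lambda>w::real^'d. w $ i * w $ j * w $ k)" by (intro continuous_intros)
  have "Ts (\<lambda>\<xi>. lat \<xi> $ i * lat \<xi> $ j * lat \<xi> $ k) x = integral UNIV (\<lambda>v.
        \<zeta> v * ((x - v) $ i * (x - v) $ j * (x - v) $ k)
      + \<zeta> v * EpL (\<lambda>w. w $ j * w $ k) 0 (axis i 1) (x - v)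
      + \<zeta> v * EpL (\<lambda>w. w $ i * w $ k) 0 (axis j 1) (x - v)
      + \<zeta> v * EpL (\<lambda>w. w $ i * w $ j) 0 (axis k 1) (x - v)
      - \<zeta> v * EpL (\<lambda>w. w $ i * w $ j * w $ k) 1 0 (x - v))"
    unfolding Ts_def SI3 by (simp add: distrib_left right_diff_distrib)
  also have "\<dots> = integral UNIV (\<lambda>v. \<zeta> v * ((x - v) $ i * (x - v) $ j * (x - v) $ k))
      + integral UNIV (\<lambda>v. \<zeta> v * EpL (\<lambda>w. w $ j * w $ k) 0 (axis i 1) (x - v))
      + integral UNIV (\<lambda>v. \<zeta> v * EpL (\<lambda>w. w $ i * w $ k) 0 (axis j 1) (x - v))
      + integral UNIV (\<lambda>v. \<zeta> v * EpL (\<lambda>w. w $ i * w $ j) 0 (axis k 1) (x - v))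
      - integral UNIV (\<lambda>v. \<zeta> v * EpL (\<lambda>w. w $ i * w $ j * w $ k) 1 0 (x - v))"
    by (rule integral_unique, intro has_integral_add has_integral_diff integrable_integral INTEp c c3 INTC continuous_intros)
  also have "\<dots> = x $ i * x $ j * x $ k + 2 * (x $ i * M2 j k + x $ j * M2 i k + x $ k * M2 i j) - 2 * M3 i j k"
    unfolding P3 KEY[OF c] KEY[OF c3] M2_def M3_def by (simp add: inner_axis' algebra_simps)
  finally show ?thesis .
qed


lemmas isfv0 = isfv[OF order_refl]

lemma WB: "wbar \<zeta> (\<lambda>\<xi>. Wc e0 e1 c2 c3 (lat \<xi>)) u = Sg (\<lambda>_. 1) u *\<^sub>R e0
   + (\<Sum>i\<in>UNIV. Sg (\<lambda>\<xi>. lat \<xi> $ i) u *\<^sub>R e1 i)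
   + (\<Sum>i\<in>UNIV. \<Sum>j\<in>UNIV. Sg (\<lambda>\<xi>. lat \<xi> $ i * lat \<xi> $ j) u *\<^sub>R c2 i j)
   + (\<Sum>i\<in>UNIV. \<Sum>j\<in>UNIV. \<Sum>k\<in>UNIV. Sg (\<lambda>\<xi>. lat \<xi> $ i * lat \<xi> $ j * lat \<xi> $ k) u *\<^sub>R c3 i j k)"
  unfolding wbar_def Sg_def isfv0 isf0 Wc_def
  by (simp add: scaleR_add_right sum.distrib scaleR_sum_right scaleR_sum_left scaleR_scaleR sum.swap[of _ "Bx _"])


lemma TR: "((\<lambda>y. \<zeta> (x - y) * Sg f y) has_integral Ts f x) UNIV"
proof -
  have z: "\<zeta> v * Sg f (x - v) = 0" if "v \<notin> cbox (- (\<chi> i. Rz)) (\<chi> i. Rz)" for v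
    using supp_box that by force
  have "((\<lambda>y. \<zeta> ((-1) *\<^sub>R y + x) * Sg f (x - ((-1) *\<^sub>R y + x))) has_integral Ts f x) UNIV"
    unfolding Ts_def by (rule aff_UNIV[OF INTS z]) auto
  moreover have "(\<lambda>y. \<zeta> ((-1) *\<^sub>R y + x) * Sg f (x - ((-1) *\<^sub>R y + x))) = (\<lambda>y. \<zeta> (x - y) * Sg f y)"
  proof
    fix y
    have "(-1) *\<^sub>R y + x = x - y" "x - ((-1) *\<^sub>R y + x) = y" by (simp_all add: algebra_simps)
    then show "\<zeta> ((-1) *\<^sub>R y + x) * Sg f (x - ((-1) *\<^sub>R y + x)) = \<zeta> (x - y) * Sg f y" by simp
  qed
  ultimately show ?thesis by simp
qed

lemma WT: "wtilde \<zeta> (\<lambda>\<xi>. Wc e0 e1 c2 c3 (lat \<xi>)) x = Ts (\<lambda>_. 1) x *\<^sub>R e0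
   + (\<Sum>i\<in>UNIV. Ts (\<lambda>\<xi>. lat \<xi> $ i) x *\<^sub>R e1 i)
   + (\<Sum>i\<in>UNIV. \<Sum>j\<in>UNIV. Ts (\<lambda>\<xi>. lat \<xi> $ i * lat \<xi> $ j) x *\<^sub>R c2 i j)
   + (\<Sum>i\<in>UNIV. \<Sum>j\<in>UNIV. \<Sum>k\<in>UNIV. Ts (\<lambda>\<xi>. lat \<xi> $ i * lat \<xi> $ j * lat \<xi> $ k) x *\<^sub>R c3 i j k)"
proof -
  have "((\<lambda>y. (\<zeta> (x - y) * Sg (\<lambda>_. 1) y) *\<^sub>R e0
   + (\<Sum>i\<in>UNIV. (\<zeta> (x - y) * Sg (\<lambda>\<xi>. lat \<xi> $ i) y) *\<^sub>R e1 i)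
   + (\<Sum>i\<in>UNIV. \<Sum>j\<in>UNIV. (\<zeta> (x - y) * Sg (\<lambda>\<xi>. lat \<xi> $ i * lat \<xi> $ j) y) *\<^sub>R c2 i j)
   + (\<Sum>i\<in>UNIV. \<Sum>j\<in>UNIV. \<Sum>k\<in>UNIV. (\<zeta> (x - y) * Sg (\<lambda>\<xi>. lat \<xi> $ i * lat \<xi> $ j * lat \<xi> $ k) y) *\<^sub>R c3 i j k))
   has_integral (Ts (\<lambda>_. 1) x *\<^sub>R e0
   + (\<Sum>i\<in>UNIV. Ts (\<lambda>\<xi>. lat \<xi> $ i) x *\<^sub>R e1 i)
   + (\<Sum>i\<in>UNIV. \<Sum>j\<in>UNIV. Ts (\<lambda>\<xi>. lat \<xi> $ i * lat \<xi> $ j) x *\<^sub>R c2 i j)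
   + (\<Sum>i\<in>UNIV. \<Sum>j\<in>UNIV. \<Sum>k\<in>UNIV. Ts (\<lambda>\<xi>. lat \<xi> $ i * lat \<xi> $ j * lat \<xi> $ k) x *\<^sub>R c3 i j k))) UNIV"
    by (intro has_integral_add has_integral_sum finite_UNIV has_integral_scaleR_left TR) simp_all
  moreover have "(\<lambda>y. \<zeta> (x - y) *\<^sub>R wbar \<zeta> (\<lambda>\<xi>. Wc e0 e1 c2 c3 (lat \<xi>)) y) = (\<lambda>y. (\<zeta> (x - y) * Sg (\<lambda>_. 1) y) *\<^sub>R e0
   + (\<Sum>i\<in>UNIV. (\<zeta> (x - y) * Sg (\<lambda>\<xi>. lat \<xi> $ i) y) *\<^sub>R e1 i)
   + (\<Sum>i\<in>UNIV. \<Sum>j\<in>UNIV. (\<zeta> (x - y) * Sg (\<lambda>\<xi>. lat \<xi> $ i * lat \<xi> $ j) y) *\<^sub>R c2 i j)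
   + (\<Sum>i\<in>UNIV. \<Sum>j\<in>UNIV. \<Sum>k\<in>UNIV. (\<zeta> (x - y) * Sg (\<lambda>\<xi>. lat \<xi> $ i * lat \<xi> $ j * lat \<xi> $ k) y) *\<^sub>R c3 i j k))"
    unfolding WB by (simp add: scaleR_add_right scaleR_sum_right)
  ultimately show ?thesis unfolding wtilde_def by (simp add: integral_unique)
qed

lemma MAIN:
  fixes p :: "real^'d \<Rightarrow> real^'m::finite"
  assumes "cubic_poly p"
  shows "\<exists>w :: ('d \<Rightarrow> int) \<Rightarrow> real^'m. \<forall>x. wtilde \<zeta> w x = p x"
proof -
  obtain c0 c1 c2 c3 where p: "\<And>x. p x = c0 + (\<Sum>i\<in>UNIV. (x$i) *\<^sub>R c1 i)
             + (\<Sum>i\<in>UNIV. \<Sum>j\<in>UNIV. (x$i * x$j) *\<^sub>R c2 i j)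
             + (\<Sum>i\<in>UNIV. \<Sum>j\<in>UNIV. \<Sum>k\<in>UNIV. (x$i * x$j * x$k) *\<^sub>R c3 i j k)"
    using assms unfolding cubic_poly_def by blast
  define D1 where "D1 = (\<lambda>l. \<Sum>j\<in>UNIV. \<Sum>k\<in>UNIV. (2 * M2 j k) *\<^sub>R c3 l j k)"
  define D2 where "D2 = (\<lambda>l. \<Sum>i\<in>UNIV. \<Sum>k\<in>UNIV. (2 * M2 i k) *\<^sub>R c3 i l k)"
  define D3 where "D3 = (\<lambda>l. \<Sum>i\<in>UNIV. \<Sum>j\<in>UNIV. (2 * M2 i j) *\<^sub>R c3 i j l)"
  define e0 where "e0 = c0 - (\<Sum>i\<in>UNIV. \<Sum>j\<in>UNIV. (2 * M2 i j) *\<^sub>R c2 i j) + (\<Sum>i\<in>UNIV. \<Sum>j\<in>UNIV. \<Sum>k\<in>UNIV. (2 * M3 i j k) *\<^sub>R c3 i j k)"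
  define e1 where "e1 = (\<lambda>l. c1 l - D1 l - D2 l - D3 l)"
  have "wtilde \<zeta> (\<lambda>\<xi>. Wc e0 e1 c2 c3 (lat \<xi>)) x = p x" for x
    unfolding WT T0 T1 T2 T3 p scaleR_one
    by (rule ALG) (simp_all add: e0_def e1_def D1_def D2_def D3_def)
  then show ?thesis by blast
qed

end

theorem lemma4p5:
  fixes \<zeta> :: "real^'d \<Rightarrow> real" and p :: "real^'d \<Rightarrow> real^'m"
  assumes "admissible_zeta \<zeta>"
    and "cubic_poly p"
  shows "\<exists>w :: ('d \<Rightarrow> int) \<Rightarrow> real^'m. \<forall>x. wtilde \<zeta> w x = p x"
  by (rule MAIN[OF assms])


end
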